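(* Let $t_0>0$, $\nu\ge1$, and let $P(t)=p_\nu(t-t_0)^{\nu-1}+\cdots+p_2(t-t_0)+p_1$ be a polynomial with complex coefficients and $p_\nu\neq0$. Then there exists a tame power series $\alpha$ with $B_\alpha[\nu-1;t]=P(t)$. Moreover, all tame power series $\alpha$ with pole order $\nu$ at $z=1$ and $B_\alpha[\nu-1;t]=P(t)$ have the same principal part at $z=1$, and for each of them $$B_\alpha[\nu-n;t_0]=\frac{(n-1)!}{(\nu-1)^{\underline{n-1}}}\,p_n,\qquad 1\le n\le\nu,$$ where $(\nu-1)^{\underline{n-1}}=(\nu-1)(\nu-2)\cdots(\nu-n+1)$ (equal to $1$ when $n=1$).
   Context: A power series $\alpha(z)=\sum_{n\ge0}a_{n+1}z^n$ is tame if it converges on the open unit disk, extends holomorphically to a punctured neighborhood of $z=1$ with a pole of order $\nu\ge0$ at $1$ ($\nu=0$ meaning holomorphic at $1$), and $(z-1)^\nu\alpha(z)$ equals, on an open neighborhood of $(0,1]$, a multi-power series $\sum_{\mathbf i\in\mathbb Z^N_{\ge0}}c_{\mathbf i}\prod_{j=1}^N(z^{e_j}-1)^{i_j}$ (some $N\ge1$, $e_j\in\mathbb Z_{>0}$) converging absolutely and uniformly there. The principal part at $z=1$ is the polar part $\sum_{n=1}^\nu k_n(z-1)^{-n}$ of the Laurent expansion. Bernoulli polynomials of a tame $\alpha$ with pole order $\nu$: $\sum_{n\ge0}B_\alpha[n;t]\frac{u^n}{n!}=(-u)^\nu\alpha(e^u)e^{tu}$ near $u=0$. *)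

theory Defs
  imports "HOL-Complex_Analysis.Complex_Analysis"
begin

text \<open>A power series alpha(z) = sum_n a n * z^n is represented by its coefficient
  sequence a (a n is the paper's a_(n+1)).  F is its holomorphic continuation.\<close>

definition multi_index_set :: "nat \<Rightarrow> (nat \<Rightarrow> nat) set" where
  "multi_index_set N = {i. \<forall>j\<ge>N. i j = 0}"

definition multi_term ::
  "nat \<Rightarrow> (nat \<Rightarrow> nat) \<Rightarrow> ((nat \<Rightarrow> nat) \<Rightarrow> complex) \<Rightarrow> (nat \<Rightarrow> nat) \<Rightarrow> complex \<Rightarrow> complex" where
  "multi_term N e c i z = c i * (\<Prod>j<N. (z ^ e j - 1) ^ i j)"

definition tame_cont :: "(nat \<Rightarrow> complex) \<Rightarrow> (complex \<Rightarrow> complex) \<Rightarrow> nat \<Rightarrow> bool" where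
  "tame_cont a F \<nu> \<longleftrightarrow>
     (\<forall>z. norm z < 1 \<longrightarrow> summable (\<lambda>n. a n * z ^ n)) \<and>
     (\<forall>z. norm z < 1 \<longrightarrow> F z = (\<Sum>n. a n * z ^ n)) \<and>
     (\<exists>r>0. F holomorphic_on (ball 0 1 \<union> (ball 1 r - {1})) \<and>
       (\<exists>h. h holomorphic_on ball 1 r \<and>
            (\<forall>z\<in>ball 1 r - {1}. h z = (z - 1) ^ \<nu> * F z) \<and>
            (\<nu> > 0 \<longrightarrow> h 1 \<noteq> 0) \<and>
            (\<exists>U N e c. open U \<and> complex_of_real ` {0<..1} \<subseteq> U \<and>
                U \<subseteq> ball 0 1 \<union> ball 1 r \<and> N \<ge> 1 \<and> (\<forall>j<N. e j > 0) \<and>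
                (\<forall>z\<in>U. (\<lambda>i. norm (multi_term N e c i z)) summable_on multi_index_set N) \<and>
                uniform_limit U (\<lambda>X z. \<Sum>i\<in>X. multi_term N e c i z)
                  (\<lambda>z. if z = 1 then h 1 else (z - 1) ^ \<nu> * F z)
                  (finite_subsets_at_top (multi_index_set N)))))"

definition tame_bernoulli :: "(complex \<Rightarrow> complex) \<Rightarrow> nat \<Rightarrow> nat \<Rightarrow> complex \<Rightarrow> complex" where
  "tame_bernoulli F \<nu> n t =
     (THE B. \<exists>r>0. \<forall>u. 0 < norm u \<and> norm u < r \<longrightarrow>
        (\<lambda>k. B k * u ^ k / fact k) sums ((- u) ^ \<nu> * F (exp u) * exp (t * u))) n"

definition principal_part :: "(complex \<Rightarrow> complex) \<Rightarrow> nat \<Rightarrow> complex \<Rightarrow> complex" where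
  "principal_part F \<nu> z =
     (\<Sum>n=1..\<nu>. fls_nth (laurent_expansion F 1) (- int n) * (z - 1) powi (- int n))"

end

theory Submission
  imports Defs
begin


lemma sum_rev_atMost: "(\<Sum>i\<le>d. f i) = (\<Sum>j\<le>d. f (d - j))" for f :: "nat \<Rightarrow> 'a::comm_monoid_add"
  by (rule sum.reindex_bij_witness[where i="\<lambda>i. d - i" and j="\<lambda>i. d - i"]) auto

lemma coeff_compare:
  fixes c c' :: "nat \<Rightarrow> complex"
  assumes "\<And>s. (\<Sum>i\<le>d. c i * s ^ (d - i)) = (\<Sum>i\<le>d. c' i * s ^ (d - i))" "i \<le> d"
  shows "c i = c' i"
proof -
  have "\<forall>s. (\<Sum>j\<le>d. c (d - j) * s ^ j) = (\<Sum>j\<le>d. c' (d - j) * s ^ j)"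
  proof
    fix s :: complex
    have "(\<Sum>j\<le>d. c (d - j) * s ^ j) = (\<Sum>i\<le>d. c i * s ^ (d - i))"
      by (subst sum_rev_atMost) (intro sum.cong refl, simp)
    also have "\<dots> = (\<Sum>i\<le>d. c' i * s ^ (d - i))" by (rule assms(1))
    also have "\<dots> = (\<Sum>j\<le>d. c' (d - j) * s ^ j)"
      by (subst sum_rev_atMost) (intro sum.cong refl, simp)
    finally show "(\<Sum>j\<le>d. c (d - j) * s ^ j) = (\<Sum>j\<le>d. c' (d - j) * s ^ j)" .
  qed
  hence "\<forall>j\<le>d. c (d - j) = c' (d - j)" by (subst (asm) polyfun_eq_coeffs)
  from this[rule_format, of "d - i"] assms(2) show ?thesis by simp
qed

lemma bern_shift:
  fixes \<Phi> :: "complex fps"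
  shows "fact m * (\<Phi> * fps_exp t) $ m =
     (\<Sum>i\<le>m. of_nat (m choose i) * (fact i * (\<Phi> * fps_exp t0) $ i) * (t - t0) ^ (m - i))"
proof -
  have e: "fps_exp t = fps_exp t0 * fps_exp (t - t0)"
    using fps_exp_add_mult[of t0 "t - t0"] by simp
  have "\<Phi> * fps_exp t = (\<Phi> * fps_exp t0) * fps_exp (t - t0)"
    unfolding e by (simp only: mult.assoc)
  hence "fact m * (\<Phi> * fps_exp t) $ m = fact m * ((\<Phi> * fps_exp t0) * fps_exp (t - t0)) $ m"
    by (simp only:)
  also have "\<dots> = fact m * (\<Sum>i=0..m. (\<Phi> * fps_exp t0) $ i * fps_exp (t - t0) $ (m - i))"
    by (simp only: fps_mult_nth[of "\<Phi> * fps_exp t0" "fps_exp (t - t0)"])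
  also have "\<dots> = fact m * (\<Sum>i=0..m. (\<Phi> * fps_exp t0) $ i * ((t - t0) ^ (m - i) / fact (m - i)))"
    by (simp only: fps_exp_nth of_nat_fact)
  also have "\<dots> = (\<Sum>i\<le>m. of_nat (m choose i) * (fact i * (\<Phi> * fps_exp t0) $ i) * (t - t0) ^ (m - i))"
    unfolding sum_distrib_left atMost_atLeast0
  proof (intro sum.cong refl)
    fix i assume i: "i \<in> {0..m}"
    have "(of_nat (m choose i) :: complex) = fact m / (fact i * fact (m - i))"
      by (rule binomial_fact) (use i in simp)
    thus "fact m * ((\<Phi> * fps_exp t0) $ i * ((t - t0) ^ (m - i) / fact (m - i))) =
      of_nat (m choose i) * (fact i * (\<Phi> * fps_exp t0) $ i) * (t - t0) ^ (m - i)"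
      by (simp add: field_simps)
  qed
  finally show ?thesis .
qed

lemma prod_choose_fact:
  assumes "k \<le> m"
  shows "(\<Prod>i<k. of_nat (m - i) :: complex) = of_nat (m choose k) * fact k"
proof -
  have "of_nat (m choose k) * (fact k :: complex) =
        (\<Prod>i=0..<k. of_nat (m - i) / of_nat (k - i)) * (\<Prod>i=0..<k. of_nat (k - i))"
    by (simp only: binomial_altdef_of_nat[OF assms] fact_prod_rev of_nat_prod)
  also have "\<dots> = (\<Prod>i=0..<k. of_nat (m - i) / of_nat (k - i) * of_nat (k - i))"
    by (rule prod.distrib[symmetric])
  also have "\<dots> = (\<Prod>i=0..<k. of_nat (m - i))"
    by (rule prod.cong) auto
  finally show ?thesis by (simp add: atLeast0LessThan)
qed

lemma bern_char:
  fixes F \<phi> :: "complex \<Rightarrow> complex"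
  assumes R: "R > 0" and holo: "\<phi> holomorphic_on ball 0 R"
    and eq: "\<And>u. 0 < norm u \<Longrightarrow> norm u < R \<Longrightarrow> \<phi> u = (-u)^\<mu> * F (exp u)"
  shows "tame_bernoulli F \<mu> k t = fact k * (fps_expansion \<phi> 0 * fps_exp t) $ k"
proof -
  define \<psi> where "\<psi> u = \<phi> u * exp (t * u)" for u
  define \<Psi> where "\<Psi> = fps_expansion \<phi> 0 * fps_exp t"
  have h\<phi>: "\<phi> has_fps_expansion fps_expansion \<phi> 0"
    by (rule has_fps_expansion_fps_expansion[OF _ _ holo]) (use R in auto)
  have h\<psi>: "\<psi> has_fps_expansion \<Psi>" unfolding \<psi>_def[abs_def] \<Psi>_def
    by (intro has_fps_expansion_mult h\<phi> has_fps_expansion_exp)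
  have holo\<psi>: "\<psi> holomorphic_on ball 0 R" unfolding \<psi>_def[abs_def]
    by (intro holomorphic_intros holo)
  define B where "B k = fact k * \<Psi> $ k" for k
  have sumsB: "(\<lambda>k. B k * u ^ k / fact k) sums \<psi> u" if "norm u < R" for u
  proof -
    have "(\<lambda>k. \<Psi> $ k * u ^ k) sums \<psi> u"
      by (rule has_fps_expansion_imp_sums_complex[OF h\<psi>, of "ereal R"]) (use holo\<psi> that in auto)
    thus ?thesis by (simp add: B_def)
  qed
  have PB: "\<exists>r>0. \<forall>u. 0 < norm u \<and> norm u < r \<longrightarrow>
        (\<lambda>k. B k * u ^ k / fact k) sums ((- u) ^ \<mu> * F (exp u) * exp (t * u))"
  proof (intro exI[of _ R] conjI allI impI)
    fix u :: complex assume u: "0 < norm u \<and> norm u < R"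
    have "\<psi> u = (- u) ^ \<mu> * F (exp u) * exp (t * u)" using eq[of u] u by (simp add: \<psi>_def)
    thus "(\<lambda>k. B k * u ^ k / fact k) sums ((- u) ^ \<mu> * F (exp u) * exp (t * u))"
      using sumsB[of u] u by simp
  qed (rule R)
  have uniq: "B' = B" if hB: "\<exists>r>0. \<forall>u. 0 < norm u \<and> norm u < r \<longrightarrow>
        (\<lambda>k. B' k * u ^ k / fact k) sums ((- u) ^ \<mu> * F (exp u) * exp (t * u))" for B'
  proof -
    obtain r where r: "r > 0" and hr: "\<And>u. 0 < norm u \<Longrightarrow> norm u < r \<Longrightarrow>
        (\<lambda>k. B' k * u ^ k / fact k) sums ((- u) ^ \<mu> * F (exp u) * exp (t * u))"
      using hB by blast
    define \<rho> where "\<rho> = min r R"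
    have \<rho>: "\<rho> > 0" using r R by (simp add: \<rho>_def)
    define Bf where "Bf = Abs_fps (\<lambda>k. B' k / fact k)"
    have sBf: "(\<lambda>k. Bf $ k * u ^ k) sums \<psi> u" if "0 < norm u" "norm u < \<rho>" for u
    proof -
      have "(\<lambda>k. B' k * u ^ k / fact k) sums \<psi> u"
        using hr[of u] eq[of u] that by (simp add: \<rho>_def \<psi>_def)
      thus ?thesis by (simp add: Bf_def)
    qed
    define u0 where "u0 = complex_of_real (\<rho> / 2)"
    have "summable (\<lambda>k. fps_nth Bf k * u0 ^ k)"
      using sBf[of u0] \<rho> by (auto simp: u0_def sums_iff)
    hence "conv_radius (fps_nth Bf) \<ge> norm u0" by (rule conv_radius_geI)
    hence rad: "fps_conv_radius Bf \<ge> ereal (\<rho> / 2)"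
      using \<rho> by (simp add: fps_conv_radius_def u0_def)
    have rad0: "fps_conv_radius Bf > 0"
      using rad \<rho> by (metis ereal_less(2) half_gt_zero order_less_le_trans)
    have ev1: "eventually (\<lambda>z::complex. z \<in> ball 0 (\<rho>/2)) (at 0)"
      using \<rho> by (intro eventually_at_in_open') auto
    have ev2: "eventually (\<lambda>z. z \<noteq> (0::complex)) (at 0)"
      by (simp add: eventually_at_filter)
    have ev: "eventually (\<lambda>z::complex. z \<in> ball 0 (\<rho>/2) - {0}) (at 0)"
      by (rule eventually_mono[OF eventually_conj[OF ev1 ev2]]) auto
    have "eventually (\<lambda>z. eval_fls (fps_to_fls Bf) z = \<psi> z) (at 0)"
      using ev
    proof eventually_elim
      case (elim z)
      hence z: "0 < norm z" "norm z < \<rho> / 2" by auto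
      have "norm z < fps_conv_radius Bf"
        using z rad by (meson ereal_less_eq(3) less_le_trans less_ereal.simps(1))
      hence "eval_fls (fps_to_fls Bf) z = eval_fps Bf z" by (rule eval_fps_to_fls)
      also have "\<dots> = \<psi> z" unfolding eval_fps_def
        using sBf[of z] z by (simp add: sums_iff)
      finally show ?case .
    qed
    hence l1: "\<psi> has_laurent_expansion fps_to_fls Bf"
      using rad0 by (simp add: has_laurent_expansion_def)
    have l2: "\<psi> has_laurent_expansion fps_to_fls \<Psi>"
      by (rule has_laurent_expansion_fps[OF h\<psi>])
    have "fps_to_fls Bf = fps_to_fls \<Psi>" by (rule has_laurent_expansion_unique[OF l1 l2])
    hence "Bf = \<Psi>" by simp
    hence "\<forall>n. B' n / fact n = \<Psi> $ n" by (auto simp: Bf_def fps_eq_iff)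
    thus "B' = B" by (auto simp: B_def fun_eq_iff field_simps)
  qed
  have "(THE B. \<exists>r>0. \<forall>u. 0 < norm u \<and> norm u < r \<longrightarrow>
        (\<lambda>k. B k * u ^ k / fact k) sums ((- u) ^ \<mu> * F (exp u) * exp (t * u))) = B"
    by (rule the_equality) (use PB uniq in blast)+
  thus ?thesis by (simp add: tame_bernoulli_def B_def \<Psi>_def)
qed



definition E1 :: "complex \<Rightarrow> complex" where
  "E1 = eval_fps (fps_shift 1 (fps_exp 1 - 1))"

lemma E1_facts: "E1 holomorphic_on UNIV" "\<And>u. exp u - 1 = u * E1 u" "E1 0 = 1"
proof -
  have rad: "fps_conv_radius (fps_exp (1::complex) - 1) = \<infinity>"
    using fps_conv_radius_diff_ge[of "\<infinity>" "fps_exp (1::complex)" 1] by simp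
  have sub: "1 \<le> subdegree (fps_exp (1::complex) - 1)"
  proof (rule subdegree_geI)
    show "fps_exp (1::complex) - 1 \<noteq> 0"
    proof
      assume "fps_exp (1::complex) - 1 = 0"
      hence "(fps_exp (1::complex) - 1) $ 1 = 0" by simp
      thus False by simp
    qed
  qed simp
  show "E1 holomorphic_on UNIV" unfolding E1_def
    by (intro holomorphic_on_eval_fps) (simp add: rad)
  have ev: "E1 u = (if u = 0 then 1 else (exp u - 1) / u)" for u
    unfolding E1_def by (subst eval_fps_shift[OF sub]) (auto simp: rad eval_fps_diff)
  show "exp u - 1 = u * E1 u" for u by (simp add: ev)
  show "E1 0 = 1" by (simp add: ev)
qed

lemma tame_cont_D:
  assumes "tame_cont a F \<nu>"
  obtains r h where "r > 0" "F holomorphic_on (ball 0 1 \<union> (ball 1 r - {1}))"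
    "h holomorphic_on ball 1 r" "\<And>z. z \<in> ball 1 r - {1} \<Longrightarrow> h z = (z - 1) ^ \<nu> * F z"
proof -
  from assms have "\<exists>r>0. F holomorphic_on (ball 0 1 \<union> (ball 1 r - {1})) \<and>
       (\<exists>h. h holomorphic_on ball 1 r \<and> (\<forall>z\<in>ball 1 r - {1}. h z = (z - 1) ^ \<nu> * F z))"
    unfolding tame_cont_def by (elim conjE exE) (intro exI conjI, assumption+)
  thus ?thesis using that by blast
qed

lemma tame_phi:
  fixes a :: "nat \<Rightarrow> complex" and F :: "complex \<Rightarrow> complex"
  assumes "tame_cont a F \<nu>"
  obtains R \<phi> where "R > 0" "\<phi> holomorphic_on ball 0 R"
    "\<And>u. 0 < norm u \<Longrightarrow> norm u < R \<Longrightarrow> \<phi> u = (-u)^\<nu> * F (exp u)"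
proof -
  obtain r h where r: "r > 0" and hh: "h holomorphic_on ball 1 r"
    and heq: "\<And>z. z \<in> ball 1 r - {1} \<Longrightarrow> h z = (z - 1) ^ \<nu> * F z"
    using tame_cont_D[OF assms] by metis
  define S where "S = {u. E1 u \<noteq> 0} \<inter> exp -` ball 1 r"
  have cE: "continuous_on UNIV E1"
    using E1_facts(1) holomorphic_on_imp_continuous_on by blast
  have "open S" unfolding S_def
    by (intro open_Int open_Collect_neq open_vimage cE continuous_intros) auto
  moreover have "0 \<in> S" using r by (simp add: S_def E1_facts(3))
  ultimately obtain R where R: "R > 0" "ball 0 R \<subseteq> S"
    by (meson open_contains_ball)
  define \<phi> where "\<phi> u = (-1) ^ \<nu> * h (exp u) / E1 u ^ \<nu>" for u
  show ?thesis
  proof (rule that[of R \<phi>])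
    show "R > 0" by (rule R)
    have "(\<lambda>u. h (exp u)) holomorphic_on ball 0 R"
      using holomorphic_on_compose_gen[of exp "ball 0 R" h "ball 1 r"] hh R(2)
      by (auto simp: S_def o_def intro!: holomorphic_intros)
    thus "\<phi> holomorphic_on ball 0 R"
      unfolding \<phi>_def using R(2) holomorphic_on_subset[OF E1_facts(1)]
      by (intro holomorphic_intros) (auto simp: S_def)
    fix u :: complex assume u: "0 < norm u" "norm u < R"
    hence uS: "u \<in> S" using R(2) by auto
    hence E: "E1 u \<noteq> 0" "exp u \<in> ball 1 r" by (auto simp: S_def)
    have "exp u \<noteq> 1" using E1_facts(2)[of u] E u by auto
    hence "h (exp u) = (u * E1 u) ^ \<nu> * F (exp u)"
      using heq[of "exp u"] E by (simp add: E1_facts(2))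
    thus "\<phi> u = (-u) ^ \<nu> * F (exp u)"
      using E by (simp add: \<phi>_def power_mult_distrib power_minus[of u])
  qed
qed



lemma tame_laurent:
  assumes "tame_cont a F \<nu>"
  shows "(\<lambda>w. F (1 + w)) has_laurent_expansion laurent_expansion F 1"
proof -
  obtain r h where r: "r > 0" and hh: "h holomorphic_on ball 1 r"
    and heq: "\<And>z. z \<in> ball 1 r - {1} \<Longrightarrow> h z = (z - 1) ^ \<nu> * F z"
    using tame_cont_D[OF assms] by metis
  have "h analytic_on {1}"
  proof -
    have "h analytic_on ball 1 r" using hh by (simp add: analytic_on_open)
    thus ?thesis by (rule analytic_on_subset) (use r in auto)
  qed
  hence "(\<lambda>x. h (1 + x)) has_fps_expansion fps_expansion h 1"
    by (rule analytic_at_imp_has_fps_expansion)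
  hence A1: "(\<lambda>x. h (1 + x)) has_laurent_expansion fps_to_fls (fps_expansion h 1)"
    by (rule has_laurent_expansion_fps)
  have A2: "(\<lambda>x::complex. x powi (- int \<nu>)) has_laurent_expansion fls_X_intpow (- int \<nu>)"
    by (rule has_laurent_expansion_fps_X_power_int)
  have "(\<lambda>x. h (1 + x) * x powi (- int \<nu>)) has_laurent_expansion
           fps_to_fls (fps_expansion h 1) * fls_X_intpow (- int \<nu>)"
    by (rule has_laurent_expansion_mult[OF A1 A2])
  also have "?this \<longleftrightarrow> (\<lambda>w. F (1 + w)) has_laurent_expansion
           fps_to_fls (fps_expansion h 1) * fls_X_intpow (- int \<nu>)"
  proof (rule has_laurent_expansion_cong[OF _ refl])
    have ev1: "eventually (\<lambda>x::complex. x \<in> ball 0 r) (at 0)"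
      using r by (intro eventually_at_in_open') auto
    have ev2: "eventually (\<lambda>z. z \<noteq> (0::complex)) (at 0)"
      by (simp add: eventually_at_filter)
    show "eventually (\<lambda>x. h (1 + x) * x powi (- int \<nu>) = F (1 + x)) (at 0)"
    proof (rule eventually_mono[OF eventually_conj[OF ev1 ev2]])
      fix x :: complex assume x: "x \<in> ball 0 r \<and> x \<noteq> 0"
      hence "1 + x \<in> ball 1 r - {1}" by (auto simp: dist_norm)
      hence "h (1 + x) = x ^ \<nu> * F (1 + x)" using heq by simp
      thus "h (1 + x) * x powi (- int \<nu>) = F (1 + x)"
      proof -
        have "x powi (- int \<nu>) = inverse (x ^ \<nu>)" by (simp add: power_int_minus)
        thus ?thesis using x \<open>h (1 + x) = x ^ \<nu> * F (1 + x)\<close> by simp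
      qed
    qed
  qed
  finally have L: "(\<lambda>w. F (1 + w)) has_laurent_expansion
           fps_to_fls (fps_expansion h 1) * fls_X_intpow (- int \<nu>)" .
  have eq: "laurent_expansion F 1 = fps_to_fls (fps_expansion h 1) * fls_X_intpow (- int \<nu>)"
    by (rule laurent_expansion_eqI[OF L])
  show ?thesis unfolding eq by (rule L)
qed


lemma ball11_Ln: "ball (1::complex) 1 \<inter> \<real>\<^sub>\<le>\<^sub>0 = {}"
proof -
    have False if z: "z \<in> ball 1 1" "z \<in> \<real>\<^sub>\<le>\<^sub>0" for z :: complex
    proof -
      have "Re z \<le> 0" using z(2) by (auto simp: complex_nonpos_Reals_iff)
      moreover have "norm (1 - z) < 1" using z(1) by (simp add: dist_norm)
      moreover have "Re (1 - z) \<le> norm (1 - z)" by (rule complex_Re_le_cmod)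
      ultimately show False by simp
    qed
    then show ?thesis by auto
qed

lemma pp_eq:
  fixes F G \<phi>F \<phi>G :: "complex \<Rightarrow> complex"
  assumes tF: "tame_cont a F \<nu>" and tG: "tame_cont b G \<nu>"
    and RF: "RF > 0" "\<phi>F holomorphic_on ball 0 RF"
      "\<And>u. 0 < norm u \<Longrightarrow> norm u < RF \<Longrightarrow> \<phi>F u = (-u)^\<nu> * F (exp u)"
    and RG: "RG > 0" "\<phi>G holomorphic_on ball 0 RG"
      "\<And>u. 0 < norm u \<Longrightarrow> norm u < RG \<Longrightarrow> \<phi>G u = (-u)^\<nu> * G (exp u)"
    and co: "\<And>i. i < \<nu> \<Longrightarrow> fps_expansion \<phi>F 0 $ i = fps_expansion \<phi>G 0 $ i"
  shows "principal_part F \<nu> = principal_part G \<nu>"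
proof -
  define \<rho> where "\<rho> = min RF RG"
  have \<rho>: "\<rho> > 0" using RF RG by (simp add: \<rho>_def)
  define D where "D = fps_expansion \<phi>F 0 - fps_expansion \<phi>G 0"
  define Rs where "Rs = fps_shift \<nu> D"
  have DRs: "D = Rs * fps_X ^ \<nu>"
    by (rule fps_ext) (auto simp: Rs_def fps_X_power_mult_right_nth D_def co)
  have radF: "fps_conv_radius (fps_expansion \<phi>F 0) \<ge> ereal \<rho>"
  proof -
    have "fps_conv_radius (fps_expansion \<phi>F 0) \<ge> ereal RF"
      by (rule conv_radius_fps_expansion) (use RF(2) in simp)
    thus ?thesis by (rule order_trans[rotated]) (simp add: \<rho>_def)
  qed
  have radG: "fps_conv_radius (fps_expansion \<phi>G 0) \<ge> ereal \<rho>"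
  proof -
    have "fps_conv_radius (fps_expansion \<phi>G 0) \<ge> ereal RG"
      by (rule conv_radius_fps_expansion) (use RG(2) in simp)
    thus ?thesis by (rule order_trans[rotated]) (simp add: \<rho>_def)
  qed
  have radD: "fps_conv_radius D \<ge> ereal \<rho>"
    unfolding D_def by (rule fps_conv_radius_diff_ge[OF radF radG])
  have radR: "fps_conv_radius Rs \<ge> ereal \<rho>" using radD by (simp add: Rs_def)
  have hF: "\<phi>F has_fps_expansion fps_expansion \<phi>F 0"
    by (rule has_fps_expansion_fps_expansion[OF _ _ RF(2)]) (use RF in auto)
  have hG: "\<phi>G has_fps_expansion fps_expansion \<phi>G 0"
    by (rule has_fps_expansion_fps_expansion[OF _ _ RG(2)]) (use RG in auto)
  have keyeq: "\<phi>F u - \<phi>G u = eval_fps Rs u * u ^ \<nu>" if u: "norm u < \<rho>" for u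
  proof -
    have u': "ereal (norm u) < ereal \<rho>" using u by simp
    have "\<phi>F u = eval_fps (fps_expansion \<phi>F 0) u"
      by (rule has_fps_expansion_imp_eval_fps_eq[OF hF, of u RF, symmetric])
         (use u RF in \<open>auto simp: \<rho>_def\<close>)
    moreover have "\<phi>G u = eval_fps (fps_expansion \<phi>G 0) u"
      by (rule has_fps_expansion_imp_eval_fps_eq[OF hG, of u RG, symmetric])
         (use u RG in \<open>auto simp: \<rho>_def\<close>)
    moreover have "eval_fps D u = eval_fps (fps_expansion \<phi>F 0) u - eval_fps (fps_expansion \<phi>G 0) u"
      unfolding D_def by (intro eval_fps_diff less_le_trans[OF u'] radF radG)
    moreover have "eval_fps D u = eval_fps Rs u * u ^ \<nu>"
      unfolding DRs by (subst eval_fps_mult) (auto intro: less_le_trans[OF u'] radR)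
    ultimately show ?thesis by simp
  qed
  define K where "K w = (-1) ^ \<nu> * eval_fps Rs (Ln (1 + w))" for w
  have anK: "K analytic_on {0}"
  proof -
    have a1: "(\<lambda>w::complex. 1 + w) analytic_on {0}" by (intro analytic_intros)
    have a2: "Ln analytic_on {1}"
    proof -
      have "Ln holomorphic_on ball 1 1"
        by (rule holomorphic_on_Ln[OF ball11_Ln])
      hence "Ln analytic_on ball 1 1" by (simp add: analytic_on_open)
      thus ?thesis by (rule analytic_on_subset) auto
    qed
    have a3: "eval_fps Rs analytic_on {0}"
    proof -
      have "ereal 0 < ereal \<rho>" using \<rho> by simp
      hence "ereal 0 < fps_conv_radius Rs" using radR by (rule less_le_trans)
      thus ?thesis by (intro analytic_on_eval_fps) auto
    qed
    have "(eval_fps Rs \<circ> (Ln \<circ> (\<lambda>w. 1 + w))) analytic_on {0}"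
    proof (rule analytic_on_compose)
      show "(Ln \<circ> (\<lambda>w. 1 + w)) analytic_on {0}"
        by (rule analytic_on_compose[OF a1]) (use a2 in simp)
      show "eval_fps Rs analytic_on (Ln \<circ> (\<lambda>w. 1 + w)) ` {0}" using a3 by simp
    qed
    hence "(\<lambda>w. (-1) ^ \<nu> * (eval_fps Rs \<circ> (Ln \<circ> (\<lambda>w. 1 + w))) w) analytic_on {0}"
      by (intro analytic_intros)
    thus ?thesis by (simp add: K_def[abs_def] o_def)
  qed
  have LK: "K has_laurent_expansion fps_to_fls (fps_expansion K 0)"
    by (rule has_laurent_expansion_fps[OF analytic_at_imp_has_fps_expansion_0[OF anK]])
  have LFG: "(\<lambda>w. F (1 + w) - G (1 + w)) has_laurent_expansion laurent_expansion F 1 - laurent_expansion G 1"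
    by (rule has_laurent_expansion_diff[OF tame_laurent[OF tF] tame_laurent[OF tG]])
  have evK: "eventually (\<lambda>w. F (1 + w) - G (1 + w) = K w) (at 0)"
  proof -
    have lim: "((\<lambda>w::complex. Ln (1 + w)) \<longlongrightarrow> Ln (1 + 0)) (at 0)"
      by (intro tendsto_intros) auto
    have e1: "eventually (\<lambda>w::complex. dist (Ln (1 + w)) 0 < \<rho>) (at 0)"
      using tendstoD[OF lim \<rho>] by simp
    have e2: "eventually (\<lambda>w::complex. w \<in> ball 0 1) (at 0)"
      by (intro eventually_at_in_open') auto
    have e3: "eventually (\<lambda>z. z \<noteq> (0::complex)) (at 0)"
      by (simp add: eventually_at_filter)
    show ?thesis
    proof (rule eventually_mono[OF eventually_conj[OF e1 eventually_conj[OF e2 e3]]])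
      fix w :: complex
      assume w: "dist (Ln (1 + w)) 0 < \<rho> \<and> w \<in> ball 0 1 \<and> w \<noteq> 0"
      define u where "u = Ln (1 + w)"
      have nw: "norm w < 1" using w by simp
      have nz: "1 + w \<noteq> 0"
      proof
        assume "1 + w = 0"
        hence "w = -1" by (simp add: add_eq_0_iff)
        thus False using nw by simp
      qed
      have eu: "exp u = 1 + w" using nz by (simp add: u_def)
      have u0: "u \<noteq> 0" using eu w by auto
      have un: "norm u < \<rho>" using w by (simp add: u_def dist_norm)
      have unF: "norm u < RF" and unG: "norm u < RG" using un by (auto simp: \<rho>_def)
      have pF: "\<phi>F u = (-u) ^ \<nu> * F (1 + w)" using RF(3)[OF _ unF] u0 eu by simp
      have pG: "\<phi>G u = (-u) ^ \<nu> * G (1 + w)" using RG(3)[OF _ unG] u0 eu by simp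
      have "(-u) ^ \<nu> * (F (1 + w) - G (1 + w)) = \<phi>F u - \<phi>G u"
        unfolding pF pG by (simp add: right_diff_distrib)
      also have "\<dots> = eval_fps Rs u * u ^ \<nu>" by (rule keyeq[OF un])
      finally have "((-1) ^ \<nu> * (F (1 + w) - G (1 + w))) * u ^ \<nu> = eval_fps Rs u * u ^ \<nu>"
        by (simp add: power_minus[of u] mult_ac)
      hence e: "(-1) ^ \<nu> * (F (1 + w) - G (1 + w)) = eval_fps Rs u"
        using u0 by simp
      have sq: "(-1::complex) ^ \<nu> * (-1) ^ \<nu> = 1"
        by (simp add: power_mult_distrib[symmetric])
      have "F (1 + w) - G (1 + w) = ((-1) ^ \<nu> * (-1) ^ \<nu>) * (F (1 + w) - G (1 + w))"
        by (simp add: sq)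
      also have "\<dots> = (-1) ^ \<nu> * eval_fps Rs u" by (simp only: mult.assoc e)
      finally have "F (1 + w) - G (1 + w) = (-1) ^ \<nu> * eval_fps Rs u" .
      thus "F (1 + w) - G (1 + w) = K w" by (simp add: K_def u_def)
    qed
  qed
  have "(\<lambda>w. F (1 + w) - G (1 + w)) has_laurent_expansion fps_to_fls (fps_expansion K 0)"
    using LK has_laurent_expansion_cong[OF evK refl] by simp
  hence eqL: "laurent_expansion F 1 - laurent_expansion G 1 = fps_to_fls (fps_expansion K 0)"
    by (rule has_laurent_expansion_unique[OF LFG])
  have nth: "fls_nth (laurent_expansion F 1) (- int n) = fls_nth (laurent_expansion G 1) (- int n)"
    if "n \<in> {1..\<nu>}" for n
  proof -
    have "fls_nth (laurent_expansion F 1 - laurent_expansion G 1) (- int n) = 0"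
      unfolding eqL using that by simp
    thus ?thesis by simp
  qed
  show ?thesis unfolding principal_part_def
    by (intro ext sum.cong refl) (simp add: nth)
qed



lemma fps_exp_0': "fps_exp (0::complex) = 1"
  by (rule fps_ext) (simp add: power_0_left)

lemma fps_solve:
  fixes Tg :: "complex fps"
  obtains cc where "\<And>n. n \<le> d \<Longrightarrow> (\<Sum>m\<le>d. fps_const (cc m) * (fps_exp 1 - 1) ^ m) $ n = Tg $ n"
proof -
  define Ex where "Ex = (fps_exp 1 - 1 :: complex fps)"
  have a0: "Ex $ 0 = 0" by (simp add: Ex_def)
  have a1: "Ex $ 1 \<noteq> 0" by (simp add: Ex_def)
  define C where "C = fps_ginv Tg Ex"
  have CE: "C oo Ex = Tg" unfolding C_def by (rule fps_ginv[OF a0 a1])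
  show ?thesis
  proof (rule that[of "\<lambda>m. C $ m"])
    fix n assume n: "n \<le> d"
    have "(\<Sum>m\<le>d. fps_const (C $ m) * (fps_exp 1 - 1) ^ m) $ n = (\<Sum>m\<le>d. C $ m * (Ex ^ m) $ n)"
      by (simp add: fps_sum_nth Ex_def)
    also have "\<dots> = (\<Sum>m\<in>{0..n}. C $ m * (Ex ^ m) $ n)"
    proof (rule sum.mono_neutral_right)
      show "{0..n} \<subseteq> {..d}" using n by auto
      show "\<forall>m\<in>{..d} - {0..n}. C $ m * (Ex ^ m) $ n = 0"
        using startsby_zero_power_prefix[OF a0] by auto
    qed simp
    also have "\<dots> = (C oo Ex) $ n" by (simp add: fps_compose_nth)
    finally show "(\<Sum>m\<le>d. fps_const (C $ m) * (fps_exp 1 - 1) ^ m) $ n = Tg $ n"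
      by (simp add: CE)
  qed
qed

lemma poly_Q:
  fixes cc :: "nat \<Rightarrow> complex"
  shows "poly (\<Sum>m\<le>d. smult (cc m) ([:-1, 1:] ^ m)) z = (\<Sum>m\<le>d. cc m * (z - 1) ^ m)"
  by (simp add: poly_sum)

lemma poly_sums:
  fixes Q :: "complex poly"
  shows "(\<lambda>n. coeff Q n * z ^ n) sums poly Q z"
proof -
  have "(\<lambda>n. coeff Q n * z ^ n) sums (\<Sum>n\<in>{..degree Q}. coeff Q n * z ^ n)"
    by (rule sums_finite) (auto simp: coeff_eq_0)
  thus ?thesis by (simp add: poly_altdef)
qed


lemma tame_poly:
  fixes cc :: "nat \<Rightarrow> complex" and d :: nat
  defines "Q \<equiv> (\<Sum>m\<le>d. smult (cc m) ([:-1, 1:] ^ m))"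
  shows "tame_cont (coeff Q) (poly Q) 0"
proof -
  define M where "M = multi_index_set 1"
  define \<iota> where "\<iota> m = (\<lambda>j::nat. if j = 0 then m else (0::nat))" for m
  define S where "S = \<iota> ` {..d}"
  define c where "c i = (if i 0 \<le> d then cc (i 0) else 0)" for i :: "nat \<Rightarrow> nat"
  define e where "e = (\<lambda>j::nat. 1::nat)"
  define U where "U = ball (0::complex) 1 \<union> ball 1 1"
  have mt: "multi_term 1 e c i z = c i * (z - 1) ^ (i 0)" for i z
    by (simp add: multi_term_def e_def)
  have mt': "multi_term (Suc 0) e c i z = c i * (z - 1) ^ (i 0)" for i z
    using mt by simp
  have finS: "finite S" by (simp add: S_def)
  have SM: "S \<subseteq> M" by (auto simp: S_def M_def multi_index_set_def \<iota>_def)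
  have out: "c i = 0" if "i \<in> M" "i \<notin> S" for i
  proof (rule ccontr)
    assume "c i \<noteq> 0"
    hence le: "i 0 \<le> d" by (auto simp: c_def split: if_splits)
    have "i = \<iota> (i 0)"
      using that(1) by (auto simp: \<iota>_def M_def multi_index_set_def fun_eq_iff)
    hence "i \<in> S" using le by (auto simp: S_def)
    thus False using that(2) by simp
  qed
  have injS: "inj_on \<iota> {..d}" by (auto simp: inj_on_def \<iota>_def fun_eq_iff)
  have sumS: "(\<Sum>i\<in>S. multi_term 1 e c i z) = poly Q z" for z
  proof -
    have "(\<Sum>i\<in>S. multi_term 1 e c i z) = (\<Sum>m\<le>d. multi_term 1 e c (\<iota> m) z)"
      unfolding S_def by (rule sum.reindex[OF injS, unfolded o_def])
    also have "\<dots> = (\<Sum>m\<le>d. cc m * (z - 1) ^ m)"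
      unfolding mt by (intro sum.cong refl) (simp add: c_def \<iota>_def)
    also have "\<dots> = poly Q z" unfolding Q_def by (rule poly_Q[symmetric])
    finally show ?thesis .
  qed
  have sumY: "(\<Sum>i\<in>Y. multi_term 1 e c i z) = poly Q z" if "finite Y" "S \<subseteq> Y" "Y \<subseteq> M" for Y z
  proof -
    have "(\<Sum>i\<in>Y. multi_term 1 e c i z) = (\<Sum>i\<in>S. multi_term 1 e c i z)"
      by (rule sum.mono_neutral_right[OF that(1,2)]) (use that(3) out in \<open>auto simp: mt mt'\<close>)
    thus ?thesis by (simp only: sumS)
  qed
  have summ: "(\<lambda>i. norm (multi_term 1 e c i z)) summable_on M" for z
  proof -
    have "(\<lambda>i. norm (multi_term 1 e c i z)) summable_on S" using finS by simp
    also have "?this \<longleftrightarrow> (\<lambda>i. norm (multi_term 1 e c i z)) summable_on M"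
      by (rule summable_on_cong_neutral) (use SM out in \<open>auto simp: mt mt'\<close>)
    finally show ?thesis .
  qed
  have unif: "uniform_limit U (\<lambda>X z. \<Sum>i\<in>X. multi_term 1 e c i z)
      (\<lambda>z. if z = 1 then poly Q 1 else (z - 1) ^ 0 * poly Q z) (finite_subsets_at_top M)"
  proof (rule uniform_limitI)
    fix \<epsilon> :: real assume \<epsilon>: "\<epsilon> > 0"
    show "\<forall>\<^sub>F X in finite_subsets_at_top M. \<forall>z\<in>U. dist (\<Sum>i\<in>X. multi_term 1 e c i z)
            (if z = 1 then poly Q 1 else (z - 1) ^ 0 * poly Q z) < \<epsilon>"
      unfolding eventually_finite_subsets_at_top
      by (rule exI[of _ S]) (use finS SM sumY \<epsilon> in auto)
  qed
  have Uprops: "open U" "complex_of_real ` {0<..1} \<subseteq> U" "U \<subseteq> ball 0 1 \<union> ball 1 1"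
  proof -
    show "open U" unfolding U_def by (intro open_Un open_ball)
    show "U \<subseteq> ball 0 1 \<union> ball 1 1" by (simp add: U_def)
    show "complex_of_real ` {0<..1} \<subseteq> U"
    proof
      fix z assume "z \<in> complex_of_real ` {0<..1}"
      then obtain x where x: "z = of_real x" "0 < x" "x \<le> 1" by auto
      show "z \<in> U"
      proof (cases "x = 1")
        case True thus ?thesis using x by (simp add: U_def)
      next
        case False
        hence "norm z < 1" using x by simp
        thus ?thesis by (simp add: U_def)
      qed
    qed
  qed
  have holo: "poly Q holomorphic_on A" for A
    using poly_holomorphic_on[of "\<lambda>z. z" A Q] by (simp add: holomorphic_on_ident)
  show ?thesis
    unfolding tame_cont_def
  proof (intro conjI allI impI)
    fix z :: complex
    show "summable (\<lambda>n. coeff Q n * z ^ n)" using poly_sums[of Q z] by (simp add: sums_iff)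
    show "poly Q z = (\<Sum>n. coeff Q n * z ^ n)" using poly_sums[of Q z] by (simp add: sums_iff)
  next
    show "\<exists>r>0. poly Q holomorphic_on ball 0 1 \<union> (ball 1 r - {1}) \<and>
      (\<exists>h. h holomorphic_on ball 1 r \<and> (\<forall>z\<in>ball 1 r - {1}. h z = (z - 1) ^ 0 * poly Q z) \<and>
           (0 < (0::nat) \<longrightarrow> h 1 \<noteq> 0) \<and>
           (\<exists>U N e c. open U \<and> complex_of_real ` {0<..1} \<subseteq> U \<and> U \<subseteq> ball 0 1 \<union> ball 1 r \<and>
              1 \<le> N \<and> (\<forall>j<N. 0 < e j) \<and>
              (\<forall>z\<in>U. (\<lambda>i. norm (multi_term N e c i z)) summable_on multi_index_set N) \<and>
              uniform_limit U (\<lambda>X z. \<Sum>i\<in>X. multi_term N e c i z)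
                 (\<lambda>z. if z = 1 then h 1 else (z - 1) ^ 0 * poly Q z)
                 (finite_subsets_at_top (multi_index_set N))))"
      apply (rule exI[of _ 1])
      apply (intro conjI holo)
      apply simp
      apply (rule exI[of _ "poly Q"])
      apply (intro conjI holo)
        apply simp
       apply simp
      apply (rule exI[of _ U], rule exI[of _ 1], rule exI[of _ e], rule exI[of _ c])
      using Uprops summ unif by (auto simp: M_def e_def)
  qed
qed


lemma exist_part:
  fixes T0 :: complex and p :: "nat \<Rightarrow> complex" and P :: "complex \<Rightarrow> complex"
  assumes nu: "\<nu> \<ge> 1" and Pd: "\<And>t. P t = (\<Sum>n=1..\<nu>. p n * (t - T0) ^ (n - 1))"
  shows "\<exists>a F \<mu>. tame_cont a F \<mu> \<and> (\<forall>t. tame_bernoulli F \<mu> (\<nu> - 1) t = P t)"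
proof -
  define d where "d = \<nu> - 1"
  define A where "A = Abs_fps (\<lambda>i. p (\<nu> - i) / (of_nat (d choose i) * fact i))"
  define Tg where "Tg = A * fps_exp (-T0)"
  obtain cc where cc: "\<And>n. n \<le> d \<Longrightarrow> (\<Sum>m\<le>d. fps_const (cc m) * (fps_exp 1 - 1) ^ m) $ n = Tg $ n"
    using fps_solve[where d=d and Tg=Tg] by metis
  define Q where "Q = (\<Sum>m\<le>d. smult (cc m) ([:-1, 1:] ^ m))"
  have tame: "tame_cont (coeff Q) (poly Q) 0" unfolding Q_def by (rule tame_poly)
  define \<Phi> where "\<Phi> = (\<Sum>m\<le>d. fps_const (cc m) * (fps_exp 1 - 1) ^ m)"
  have e1: "(\<lambda>u::complex. exp u - 1) has_fps_expansion fps_exp 1 - 1"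
    by (rule has_fps_expansion_diff[OF has_fps_expansion_exp1 has_fps_expansion_1])
  have h1: "(\<lambda>u. \<Sum>m\<le>d. cc m * (exp u - 1) ^ m) has_fps_expansion \<Phi>"
    unfolding \<Phi>_def
    by (rule has_fps_expansion_sum, rule has_fps_expansion_cmult_left, rule has_fps_expansion_power, rule e1)
  have feq: "(\<lambda>u. poly Q (exp u)) = (\<lambda>u. \<Sum>m\<le>d. cc m * (exp u - 1) ^ m)"
    by (rule ext) (simp only: Q_def poly_Q)
  have hexp: "(\<lambda>u. poly Q (exp u)) has_fps_expansion \<Phi>"
    unfolding feq by (rule h1)
  have holo: "(\<lambda>u. poly Q (exp u)) holomorphic_on ball 0 1"
    by (intro poly_holomorphic_on holomorphic_intros)
  have B: "tame_bernoulli (poly Q) 0 k t = fact k * (\<Phi> * fps_exp t) $ k" for k t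
  proof -
    have "tame_bernoulli (poly Q) 0 k t = fact k * (fps_expansion (\<lambda>u. poly Q (exp u)) 0 * fps_exp t) $ k"
      by (rule bern_char[OF _ holo]) auto
    thus ?thesis by (simp only: fps_expansion_eqI[OF hexp])
  qed
  have TA: "Tg * fps_exp T0 = A"
  proof -
    have "Tg * fps_exp T0 = A * fps_exp (-T0 + T0)"
      by (simp only: Tg_def fps_exp_add_mult mult.assoc)
    thus ?thesis by (simp add: fps_exp_0')
  qed
  have coef: "(\<Phi> * fps_exp T0) $ i = A $ i" if i: "i \<le> d" for i
  proof -
    have "(\<Phi> * fps_exp T0) $ i = (\<Sum>j=0..i. \<Phi> $ j * fps_exp T0 $ (i - j))" by (rule fps_mult_nth)
    also have "\<dots> = (\<Sum>j=0..i. Tg $ j * fps_exp T0 $ (i - j))"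
      by (intro sum.cong refl) (use i cc in \<open>simp add: \<Phi>_def\<close>)
    also have "\<dots> = (Tg * fps_exp T0) $ i" by (rule fps_mult_nth[symmetric])
    finally show ?thesis by (simp add: TA)
  qed
  have "tame_bernoulli (poly Q) 0 (\<nu> - 1) t = P t" for t
  proof -
    have "tame_bernoulli (poly Q) 0 (\<nu> - 1) t = fact d * (\<Phi> * fps_exp t) $ d"
      by (simp add: B d_def)
    also have "\<dots> = (\<Sum>i\<le>d. of_nat (d choose i) * (fact i * (\<Phi> * fps_exp T0) $ i) * (t - T0) ^ (d - i))"
      by (rule bern_shift)
    also have "\<dots> = (\<Sum>i\<le>d. p (\<nu> - i) * (t - T0) ^ (d - i))"
    proof (intro sum.cong refl)
      fix i assume i: "i \<in> {..d}"
      hence nz: "(of_nat (d choose i) :: complex) \<noteq> 0" by simp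
      show "of_nat (d choose i) * (fact i * (\<Phi> * fps_exp T0) $ i) * (t - T0) ^ (d - i) =
            p (\<nu> - i) * (t - T0) ^ (d - i)"
        using i nz by (simp add: coef A_def)
    qed
    also have "\<dots> = (\<Sum>n=1..\<nu>. p n * (t - T0) ^ (n - 1))"
      by (rule sum.reindex_bij_witness[where i="\<lambda>n. \<nu> - n" and j="\<lambda>i. \<nu> - i"])
         (use nu in \<open>auto simp: d_def\<close>)
    also have "\<dots> = P t" by (simp add: Pd)
    finally show ?thesis .
  qed
  thus ?thesis using tame by blast
qed




lemma bern_poly:
  fixes T0 :: complex
  assumes tF: "tame_cont a F \<nu>" and hP: "\<forall>t. tame_bernoulli F \<nu> (\<nu> - 1) t = P t"
    and Pd: "\<And>t. P t = (\<Sum>n=1..\<nu>. p n * (t - T0) ^ (n - 1))" and n: "n \<in> {1..\<nu>}"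
  shows "tame_bernoulli F \<nu> (\<nu> - n) T0 = fact (n - 1) / (\<Prod>k<n - 1. of_nat (\<nu> - 1 - k)) * p n"
proof -
  obtain R \<phi> where R: "R > 0" "\<phi> holomorphic_on ball 0 R"
    "\<And>u. 0 < norm u \<Longrightarrow> norm u < R \<Longrightarrow> \<phi> u = (-u)^\<nu> * F (exp u)"
    using tame_phi[OF tF] by metis
  define \<Phi> where "\<Phi> = fps_expansion \<phi> 0"
  define d where "d = \<nu> - 1"
  have nu: "\<nu> \<ge> 1" using n by auto
  have B: "tame_bernoulli F \<nu> k t = fact k * (\<Phi> * fps_exp t) $ k" for k t
    unfolding \<Phi>_def by (rule bern_char[OF R])
  define b where "b i = tame_bernoulli F \<nu> i T0" for i
  have eq: "(\<Sum>i\<le>d. (of_nat (d choose i) * b i) * s ^ (d - i)) = (\<Sum>i\<le>d. p (\<nu> - i) * s ^ (d - i))" for s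
  proof -
    have bs: "fact d * (\<Phi> * fps_exp (T0 + s)) $ d = (\<Sum>i\<le>d. of_nat (d choose i) * (fact i * (\<Phi> * fps_exp T0) $ i) * ((T0 + s) - T0) ^ (d - i))"
      by (rule bern_shift)
    have "(\<Sum>i\<le>d. (of_nat (d choose i) * b i) * s ^ (d - i)) = fact d * (\<Phi> * fps_exp (T0 + s)) $ d"
      unfolding bs by (simp add: b_def B)
    also have "\<dots> = P (T0 + s)" using hP B by (simp add: d_def)
    also have "\<dots> = (\<Sum>n=1..\<nu>. p n * s ^ (n - 1))" by (simp add: Pd)
    also have "\<dots> = (\<Sum>i\<le>d. p (\<nu> - i) * s ^ (d - i))"
      by (rule sum.reindex_bij_witness[where i="\<lambda>i. \<nu> - i" and j="\<lambda>n. \<nu> - n"])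
         (use nu in \<open>auto simp: d_def\<close>)
    finally show ?thesis .
  qed
  have le: "\<nu> - n \<le> d" using n by (auto simp: d_def)
  have c: "of_nat (d choose (\<nu> - n)) * b (\<nu> - n) = p (\<nu> - (\<nu> - n))"
    by (rule coeff_compare[where c="\<lambda>i. of_nat (d choose i) * b i" and c'="\<lambda>i. p (\<nu> - i)", OF eq le])
  have pn: "p (\<nu> - (\<nu> - n)) = p n" using n by auto
  have sym: "d choose (\<nu> - n) = d choose (n - 1)"
    using n binomial_symmetric[OF le] by (auto simp: d_def)
  have pr: "(\<Prod>k<n - 1. of_nat (\<nu> - 1 - k) :: complex) = of_nat (d choose (n - 1)) * fact (n - 1)"
    unfolding d_def[symmetric] by (rule prod_choose_fact) (use n in \<open>auto simp: d_def\<close>)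
  have nz: "(of_nat (d choose (n - 1)) :: complex) \<noteq> 0"
    using n by (auto simp: d_def)
  have "b (\<nu> - n) = p n / of_nat (d choose (n - 1))"
    using c pn sym nz by (simp add: field_simps)
  thus ?thesis unfolding pr using nz by (simp add: b_def field_simps)
qed

lemma pp_unique:
  assumes tF: "tame_cont a F \<nu>" and hPF: "\<forall>t. tame_bernoulli F \<nu> (\<nu> - 1) t = P t"
    and tG: "tame_cont b G \<nu>" and hPG: "\<forall>t. tame_bernoulli G \<nu> (\<nu> - 1) t = P t"
  shows "principal_part F \<nu> = principal_part G \<nu>"
proof -
  obtain RF \<phi>F where RF: "RF > 0" "\<phi>F holomorphic_on ball 0 RF"
    "\<And>u. 0 < norm u \<Longrightarrow> norm u < RF \<Longrightarrow> \<phi>F u = (-u)^\<nu> * F (exp u)"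
    using tame_phi[OF tF] by metis
  obtain RG \<phi>G where RG: "RG > 0" "\<phi>G holomorphic_on ball 0 RG"
    "\<And>u. 0 < norm u \<Longrightarrow> norm u < RG \<Longrightarrow> \<phi>G u = (-u)^\<nu> * G (exp u)"
    using tame_phi[OF tG] by metis
  define d where "d = \<nu> - 1"
  show ?thesis
  proof (rule pp_eq[OF tF tG RF RG])
    fix i assume i: "i < \<nu>"
    hence le: "i \<le> d" by (simp add: d_def)
    define c where "c j = of_nat (d choose j) * (fact j * fps_expansion \<phi>F 0 $ j)" for j
    define c' where "c' j = of_nat (d choose j) * (fact j * fps_expansion \<phi>G 0 $ j)" for j
    have "(\<Sum>j\<le>d. c j * s ^ (d - j)) = (\<Sum>j\<le>d. c' j * s ^ (d - j))" for s
    proof -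
      have bs: "fact d * (fps_expansion \<phi>F 0 * fps_exp s) $ d = (\<Sum>i\<le>d. of_nat (d choose i) * (fact i * (fps_expansion \<phi>F 0 * fps_exp 0) $ i) * (s - 0) ^ (d - i))"
        by (rule bern_shift)
      have "(\<Sum>j\<le>d. c j * s ^ (d - j)) = fact d * (fps_expansion \<phi>F 0 * fps_exp s) $ d"
        unfolding bs by (simp add: c_def fps_exp_0')
      also have "\<dots> = P s" using hPF bern_char[OF RF] by (simp add: d_def)
      also have "\<dots> = fact d * (fps_expansion \<phi>G 0 * fps_exp s) $ d"
        using hPG bern_char[OF RG] by (simp add: d_def)
      also have "\<dots> = (\<Sum>i\<le>d. of_nat (d choose i) * (fact i * (fps_expansion \<phi>G 0 * fps_exp 0) $ i) * (s - 0) ^ (d - i))"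
        by (rule bern_shift)
      also have "\<dots> = (\<Sum>j\<le>d. c' j * s ^ (d - j))"
        by (simp add: c'_def fps_exp_0')
      finally show ?thesis .
    qed
    hence "c i = c' i" by (rule coeff_compare) (rule le)
    moreover have "(of_nat (d choose i) :: complex) \<noteq> 0" using le by simp
    ultimately show "fps_expansion \<phi>F 0 $ i = fps_expansion \<phi>G 0 $ i"
      by (simp add: c_def c'_def)
  qed
qed


theorem mainTheorem6:
  fixes t0 :: real and \<nu> :: nat and p :: "nat \<Rightarrow> complex" and P :: "complex \<Rightarrow> complex"
  assumes "t0 > 0" and "\<nu> \<ge> 1" and "p \<nu> \<noteq> 0"
    and P_def: "\<And>t. P t = (\<Sum>n=1..\<nu>. p n * (t - complex_of_real t0) ^ (n - 1))"
  shows "(\<exists>a F \<mu>. tame_cont a F \<mu> \<and> (\<forall>t. tame_bernoulli F \<mu> (\<nu> - 1) t = P t))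
    \<and> (\<forall>a F b G. tame_cont a F \<nu> \<and> (\<forall>t. tame_bernoulli F \<nu> (\<nu> - 1) t = P t)
          \<and> tame_cont b G \<nu> \<and> (\<forall>t. tame_bernoulli G \<nu> (\<nu> - 1) t = P t)
          \<longrightarrow> principal_part F \<nu> = principal_part G \<nu>)
    \<and> (\<forall>a F. tame_cont a F \<nu> \<and> (\<forall>t. tame_bernoulli F \<nu> (\<nu> - 1) t = P t)
          \<longrightarrow> (\<forall>n\<in>{1..\<nu>}. tame_bernoulli F \<nu> (\<nu> - n) (complex_of_real t0)
                = fact (n - 1) / (\<Prod>k<n - 1. of_nat (\<nu> - 1 - k)) * p n))"
proof (intro conjI)
  show "\<exists>a F \<mu>. tame_cont a F \<mu> \<and> (\<forall>t. tame_bernoulli F \<mu> (\<nu> - 1) t = P t)"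
    by (rule exist_part[OF assms(2) P_def])
  show "\<forall>a F b G. tame_cont a F \<nu> \<and> (\<forall>t. tame_bernoulli F \<nu> (\<nu> - 1) t = P t)
          \<and> tame_cont b G \<nu> \<and> (\<forall>t. tame_bernoulli G \<nu> (\<nu> - 1) t = P t)
          \<longrightarrow> principal_part F \<nu> = principal_part G \<nu>"
  proof (intro allI impI)
    fix a F b G
    assume h: "tame_cont a F \<nu> \<and> (\<forall>t. tame_bernoulli F \<nu> (\<nu> - 1) t = P t)
          \<and> tame_cont b G \<nu> \<and> (\<forall>t. tame_bernoulli G \<nu> (\<nu> - 1) t = P t)"
    show "principal_part F \<nu> = principal_part G \<nu>"
    proof -
      show ?thesis by (rule pp_unique[OF conjunct1[OF h] conjunct1[OF conjunct2[OF h]]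
        conjunct1[OF conjunct2[OF conjunct2[OF h]]] conjunct2[OF conjunct2[OF conjunct2[OF h]]]])
    qed
  qed
  show "\<forall>a F. tame_cont a F \<nu> \<and> (\<forall>t. tame_bernoulli F \<nu> (\<nu> - 1) t = P t)
          \<longrightarrow> (\<forall>n\<in>{1..\<nu>}. tame_bernoulli F \<nu> (\<nu> - n) (complex_of_real t0)
                = fact (n - 1) / (\<Prod>k<n - 1. of_nat (\<nu> - 1 - k)) * p n)"
  proof (intro allI impI ballI)
    fix a F n
    assume h: "tame_cont a F \<nu> \<and> (\<forall>t. tame_bernoulli F \<nu> (\<nu> - 1) t = P t)"
      and n: "n \<in> {1..\<nu>}"
    show "tame_bernoulli F \<nu> (\<nu> - n) (complex_of_real t0)
                = fact (n - 1) / (\<Prod>k<n - 1. of_nat (\<nu> - 1 - k)) * p n"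
    proof -
      show ?thesis by (rule bern_poly[OF conjunct1[OF h] conjunct2[OF h] P_def n])
    qed
  qed
qed

end
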